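(* Suppose that Assumptions (A1) and (A2) hold. Then there is a constant $C>0$ depending only on $\alpha$, $\gamma$, the constants in (A1) and (A2), and $\|V\|_{L^\infty}$ (independent of $\epsilon\in(0,1]$) such that every solution $(u,m)$ of Problem 1 satisfies $\int_0^1 m\,dx\le C$.
   Context: Let $\mathbb{T}=\mathbb{R}/\mathbb{Z}$ be the one-dimensional torus; functions on $\mathbb{T}$ are identified with $1$-periodic functions on $\mathbb{R}$, and integrals over $\mathbb{T}$ are written $\int_0^1$. Let $H:\mathbb{R}\to\mathbb{R}$ be of class $C^2$, $V:\mathbb{T}\to\mathbb{R}$ continuous, $\alpha>0$, and $0<\epsilon\le 1$. We say $(u,m)$ solves Problem 1 if $u,m\in C^2(\mathbb{T})$, $m>0$ on $\mathbb{T}$, and on $\mathbb{T}$: $$u-u_{xx}+H(u_x)+V(x)=m^\alpha+\epsilon(m-m_{xx}),\qquad m-m_{xx}-(H'(u_x)m)_x=1-\epsilon(u-u_{xx}).$$ Assumptions: (A1) there exist constants $C_1,C_2,C_3>0$ and $\gamma>1$ such that $-C_1+C_2|p|^\gamma\le H(p)\le C_1+C_3|p|^\gamma$ for all $p\in\mathbb{R}$. (A2) There exist constants $\tilde C_1,\tilde C_2,\tilde C_3>0$ such that $-\tilde C_1+\tilde C_2|p|^\gamma\le pH'(p)-H(p)\le \tilde C_1+\tilde C_3|p|^\gamma$ for all $p$ (same $\gamma$ as in (A1)). *)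

theory Defs
  imports "HOL-Analysis.Analysis"
begin

text \<open>Functions on the torus R/Z are identified with 1-periodic functions on R.\<close>
definition periodic1 :: "(real \<Rightarrow> real) \<Rightarrow> bool" where
  "periodic1 f \<longleftrightarrow> (\<forall>x. f (x + 1) = f x)"

definition C2 :: "(real \<Rightarrow> real) \<Rightarrow> bool" where
  "C2 f \<longleftrightarrow> (\<forall>x. f differentiable (at x)) \<and> (\<forall>x. deriv f differentiable (at x))
           \<and> continuous_on UNIV (deriv (deriv f))"

definition sup_norm_T :: "(real \<Rightarrow> real) \<Rightarrow> real" where
  "sup_norm_T V = (SUP x\<in>{0..1}. \<bar>V x\<bar>)"

definition solves_problem1 ::
  "(real \<Rightarrow> real) \<Rightarrow> (real \<Rightarrow> real) \<Rightarrow> real \<Rightarrow> real \<Rightarrow> (real \<Rightarrow> real) \<Rightarrow> (real \<Rightarrow> real) \<Rightarrow> bool" where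
  "solves_problem1 H V \<alpha> \<epsilon> u m \<longleftrightarrow>
     C2 u \<and> C2 m \<and> periodic1 u \<and> periodic1 m \<and> (\<forall>x. m x > 0) \<and>
     (\<forall>x. u x - deriv (deriv u) x + H (deriv u x) + V x
            = m x powr \<alpha> + \<epsilon> * (m x - deriv (deriv m) x)) \<and>
     (\<forall>x. m x - deriv (deriv m) x - deriv (\<lambda>y. deriv H (deriv u y) * m y) x
            = 1 - \<epsilon> * (u x - deriv (deriv u) x))"

end

theory Submission
  imports Defs
begin


lemma ftc0:
  fixes f f' :: "real \<Rightarrow> real"
  assumes "\<And>x. (f has_real_derivative f' x) (at x)" "f 1 = f 0"
  shows "(f' has_integral 0) {0..1}"
proof -
  have "(f' has_integral (f 1 - f 0)) {0..1}"
    apply (rule fundamental_theorem_of_calculus)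
    using assms(1) by (auto simp: has_real_derivative_iff_has_vector_derivative[symmetric] intro: DERIV_subset)
  then show ?thesis using assms(2) by simp
qed

lemma per_deriv:
  assumes "periodic1 f" "\<forall>x. f differentiable at x"
  shows "deriv f 1 = deriv f 0"
proof -
  have e: "(\<lambda>y. f (y + 1)) = f" using assms(1) unfolding periodic1_def by auto
  have "(f has_field_derivative deriv f (0+1)) (at (0+1))"
    using assms(2) DERIV_deriv_iff_real_differentiable by blast
  then have "((\<lambda>y. f (y + 1)) has_field_derivative deriv f 1) (at 0)"
    using DERIV_shift[of f "deriv f 1" 0 1] by simp
  then have a: "(f has_field_derivative deriv f 1) (at 0)" using e by simp
  have b: "(f has_field_derivative deriv f 0) (at 0)"
    using assms(2) DERIV_deriv_iff_real_differentiable by blast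
  show ?thesis using DERIV_unique[OF a b] .
qed

lemma key_alg:
  fixes u u1 u2 m m1 m2 h hp vv pp e dw :: real
  assumes e1: "u - u2 + h + vv = pp + e*(m - m2)"
    and e2: "m - m2 - dw = 1 - e*(u - u2)"
  shows "-u + e*u^2 - (u*m2 - u2*m + dw*u + hp*m*u1) - e*(m1^2 + m*m2) - e*(u1^2+u*u2)
       = m*(h - u1*hp) + vv*m - pp*m - e*m^2 - e*m1^2 - e*u1^2"
proof -
  have h: "h = pp + e*(m - m2) - u + u2 - vv" using e1 by linarith
  have d: "dw = m - m2 - 1 + e*(u - u2)" using e2 by linarith
  show ?thesis unfolding h d by (simp add: algebra_simps power2_eq_square)
qed

lemma final_arith:
  fixes A B S e K :: real
  assumes "A - 1 + e*B = 0" "-B + e*S \<le> K*A" "S \<ge> B^2" "A \<ge> 0" "0<e" "e\<le>1" "K \<ge> 0"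
  shows "A \<le> 1 + K"
proof (rule ccontr)
  assume n: "\<not> A \<le> 1 + K"
  have "-e*B + e*(e*S) \<le> e*(K*A)" using assms(2,5) by (metis mult_left_mono less_eq_real_def right_diff_distrib' minus_mult_left add.commute diff_conv_add_uminus distrib_left)
  moreover have "e*(e*S) \<ge> (e*B)^2" proof -
    have "e^2*B^2 \<le> e^2 * S" using assms(3) by (simp add: mult_left_mono)
    then show ?thesis by (simp add: power_mult_distrib power2_eq_square mult_ac)
  qed
  moreover have "e*B = 1 - A" using assms(1) by linarith
  moreover have "e*(K*A) \<le> K*A" using assms by (simp add: mult_left_le_one_le mult_nonneg_nonneg)
  ultimately have "A - 1 + (1-A)^2 \<le> K*A" by (metis (no_types, lifting) add_le_cancel_left diff_add_cancel le_diff_eq minus_diff_eq minus_mult_left order.trans add_mono_thms_linordered_semiring(1) linorder_not_le) 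
  then have "A*(A-1) \<le> K*A" by (simp add: algebra_simps power2_eq_square)
  then have "A - 1 \<le> K" using n assms(7) by (smt (verit) mult_le_cancel_left_pos mult.commute)
  then show False using n by simp
qed

theorem mainTheorem4:
  fixes \<alpha> \<gamma> C\<^sub>1 C\<^sub>2 C\<^sub>3 D\<^sub>1 D\<^sub>2 D\<^sub>3 M :: real
  assumes "\<alpha> > 0" and "\<gamma> > 1"
    and "C\<^sub>1 > 0" and "C\<^sub>2 > 0" and "C\<^sub>3 > 0"
    and "D\<^sub>1 > 0" and "D\<^sub>2 > 0" and "D\<^sub>3 > 0"
  shows "\<exists>C>0. \<forall>(H :: real \<Rightarrow> real) (V :: real \<Rightarrow> real) \<epsilon> u m.
           C2 H
         \<and> (\<forall>p. - C\<^sub>1 + C\<^sub>2 * \<bar>p\<bar> powr \<gamma> \<le> H p \<and> H p \<le> C\<^sub>1 + C\<^sub>3 * \<bar>p\<bar> powr \<gamma>)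
         \<and> (\<forall>p. - D\<^sub>1 + D\<^sub>2 * \<bar>p\<bar> powr \<gamma> \<le> p * deriv H p - H p
                \<and> p * deriv H p - H p \<le> D\<^sub>1 + D\<^sub>3 * \<bar>p\<bar> powr \<gamma>)
         \<and> continuous_on UNIV V \<and> periodic1 V \<and> sup_norm_T V = M
         \<and> 0 < \<epsilon> \<and> \<epsilon> \<le> 1
         \<and> solves_problem1 H V \<alpha> \<epsilon> u m
         \<longrightarrow> integral {0..1} m \<le> C"
proof (rule exI[of _ "1 + D\<^sub>1 + \<bar>M\<bar>"], intro conjI allI impI)
  show "0 < 1 + D\<^sub>1 + \<bar>M\<bar>" using assms by simp
  fix H V :: "real \<Rightarrow> real" and e :: real and u m :: "real \<Rightarrow> real"
  assume A: "C2 H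
         \<and> (\<forall>p. - C\<^sub>1 + C\<^sub>2 * \<bar>p\<bar> powr \<gamma> \<le> H p \<and> H p \<le> C\<^sub>1 + C\<^sub>3 * \<bar>p\<bar> powr \<gamma>)
         \<and> (\<forall>p. - D\<^sub>1 + D\<^sub>2 * \<bar>p\<bar> powr \<gamma> \<le> p * deriv H p - H p
                \<and> p * deriv H p - H p \<le> D\<^sub>1 + D\<^sub>3 * \<bar>p\<bar> powr \<gamma>)
         \<and> continuous_on UNIV V \<and> periodic1 V \<and> sup_norm_T V = M
         \<and> 0 < e \<and> e \<le> 1
         \<and> solves_problem1 H V \<alpha> e u m"
  have CH: "C2 H" and A2: "\<And>p. - D\<^sub>1 + D\<^sub>2 * \<bar>p\<bar> powr \<gamma> \<le> p * deriv H p - H p"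
    and cV: "continuous_on UNIV V" and MV: "sup_norm_T V = M" and e0: "0 < e" and e1: "e \<le> 1"
    and S: "solves_problem1 H V \<alpha> e u m" using A by auto
  have Cu: "C2 u" and Cm: "C2 m" and pu: "periodic1 u" and pm: "periodic1 m" and mpos: "\<And>x. m x > 0"
    and E1: "\<And>x. u x - deriv (deriv u) x + H (deriv u x) + V x
            = m x powr \<alpha> + e * (m x - deriv (deriv m) x)"
    and E2: "\<And>x. m x - deriv (deriv m) x - deriv (\<lambda>y. deriv H (deriv u y) * m y) x
            = 1 - e * (u x - deriv (deriv u) x)"
    using S unfolding solves_problem1_def by auto
  define u1 where "u1 = deriv u"
  define u2 where "u2 = deriv u1"
  define m1 where "m1 = deriv m"
  define m2 where "m2 = deriv m1"
  define hp where "hp = deriv H"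
  define w where "w = (\<lambda>y. hp (u1 y) * m y)"
  define dw where "dw = deriv w"
  have du: "\<And>x. (u has_real_derivative u1 x) (at x)" and du1: "\<And>x. (u1 has_real_derivative u2 x) (at x)"
    using Cu unfolding C2_def u1_def u2_def by (auto simp: DERIV_deriv_iff_real_differentiable)
  have dm: "\<And>x. (m has_real_derivative m1 x) (at x)" and dm1: "\<And>x. (m1 has_real_derivative m2 x) (at x)"
    using Cm unfolding C2_def m1_def m2_def by (auto simp: DERIV_deriv_iff_real_differentiable)
  have dH: "\<And>x. hp differentiable at x" using CH unfolding C2_def hp_def by auto
  have wd: "\<And>x. w differentiable at x"
  proof -
    fix x
    have "(hp has_real_derivative deriv hp (u1 x)) (at (u1 x))"
      using dH DERIV_deriv_iff_real_differentiable by blast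
    from DERIV_chain2[OF this du1] have "(\<lambda>y. hp (u1 y)) differentiable at x"
      using real_differentiable_def by blast
    moreover have "m differentiable at x" using dm real_differentiable_def by blast
    ultimately show "w differentiable at x" unfolding w_def by (rule differentiable_mult)
  qed
  then have dwd: "\<And>x. (w has_real_derivative dw x) (at x)"
    unfolding dw_def by (simp add: DERIV_deriv_iff_real_differentiable)
  have u1p: "u1 1 = u1 0" unfolding u1_def using pu Cu C2_def per_deriv by blast
  have m1p: "m1 1 = m1 0" unfolding m1_def using pm Cm C2_def per_deriv by blast
  have u0: "u 1 = u 0" using pu unfolding periodic1_def by (metis add_0)
  have m0: "m 1 = m 0" using pm unfolding periodic1_def by (metis add_0)
  have w0: "w 1 = w 0" unfolding w_def using u1p m0 by simp
  have cu: "continuous_on {0..1} u" using du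
    by (meson DERIV_continuous continuous_at_imp_continuous_on)
  have cm: "continuous_on {0..1} m" using dm
    by (meson DERIV_continuous continuous_at_imp_continuous_on)
  have iu: "(u has_integral integral {0..1} u) {0..1}"
    using integrable_continuous_interval[OF cu] by (simp add: integrable_integral)
  have im: "(m has_integral integral {0..1} m) {0..1}"
    using integrable_continuous_interval[OF cm] by (simp add: integrable_integral)
  have cu2: "continuous_on {0..1} (\<lambda>x. (u x)^2)" using cu by (intro continuous_intros)
  have iu2: "((\<lambda>x. (u x)^2) has_integral integral {0..1} (\<lambda>x. (u x)^2)) {0..1}"
    using integrable_continuous_interval[OF cu2] by (simp add: integrable_integral)
  define B where "B = integral {0..1} u"
  define Am where "Am = integral {0..1} m"
  define Su where "Su = integral {0..1} (\<lambda>x. (u x)^2)"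
  have F2: "((\<lambda>x. m2 x + dw x + e * u2 x) has_integral 0) {0..1}"
  proof -
    have "((\<lambda>x. m1 x + w x + e * u1 x) has_real_derivative (m2 x + dw x + e * u2 x)) (at x)" for x
      by (intro derivative_intros dm1 dwd DERIV_cmult du1)
    then show ?thesis by (rule ftc0) (simp add: m1p w0 u1p)
  qed
  have P2: "\<And>x. m2 x + dw x + e * u2 x = m x - 1 + e * u x"
    using E2 unfolding u2_def u1_def m2_def m1_def dw_def w_def hp_def by (simp add: algebra_simps)
  have I2: "((\<lambda>x. m x - 1 + e * u x) has_integral (Am - 1 + e * B)) {0..1}"
    unfolding Am_def B_def
    using has_integral_add[OF has_integral_diff[OF im has_integral_const_real[of 1 0 1]] has_integral_cmul[OF iu, of e]]
    by simp
  have eq2: "Am - 1 + e * B = 0"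
    using F2 I2 P2 has_integral_unique by (metis (no_types, lifting) has_integral_cong)
  define P where "P = (\<lambda>x. u x * m1 x - u1 x * m x + w x * u x)"
  define P' where "P' = (\<lambda>x. u x * m2 x - u2 x * m x + dw x * u x + w x * u1 x)"
  have IP: "(P' has_integral 0) {0..1}"
  proof (rule ftc0)
    fix x
    have "(P has_real_derivative (u1 x * m1 x + m2 x * u x - (u2 x * m x + m1 x * u1 x) + (dw x * u x + u1 x * w x))) (at x)"
      unfolding P_def using DERIV_add[OF DERIV_diff[OF DERIV_mult[OF du dm1] DERIV_mult[OF du1 dm]] DERIV_mult[OF dwd du]] .
    then show "(P has_real_derivative P' x) (at x)" unfolding P'_def by (simp add: algebra_simps)
  next
    show "P 1 = P 0" unfolding P_def using u0 m0 u1p m1p w0 by simp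
  qed
  have IQm: "((\<lambda>x. (m1 x)^2 + m x * m2 x) has_integral 0) {0..1}"
  proof (rule ftc0)
    fix x
    have "((\<lambda>x. m x * m1 x) has_real_derivative (m1 x * m1 x + m2 x * m x)) (at x)"
      using DERIV_mult[OF dm dm1] .
    then show "((\<lambda>x. m x * m1 x) has_real_derivative (m1 x)^2 + m x * m2 x) (at x)"
      by (simp add: power2_eq_square mult.commute)
  qed (simp add: m0 m1p)
  have IQu: "((\<lambda>x. (u1 x)^2 + u x * u2 x) has_integral 0) {0..1}"
  proof (rule ftc0)
    fix x
    have "((\<lambda>x. u x * u1 x) has_real_derivative (u1 x * u1 x + u2 x * u x)) (at x)"
      using DERIV_mult[OF du du1] .
    then show "((\<lambda>x. u x * u1 x) has_real_derivative (u1 x)^2 + u x * u2 x) (at x)"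
      by (simp add: power2_eq_square mult.commute)
  qed (simp add: u0 u1p)
  have Mnn: "0 \<le> M" and Vle: "\<And>x. x \<in> {0..1} \<Longrightarrow> V x \<le> M"
  proof -
    have cV01: "continuous_on {0..1} (\<lambda>x. \<bar>V x\<bar>)"
      using cV by (intro continuous_intros) (auto intro: continuous_on_subset)
    have bdd: "bdd_above ((\<lambda>x. \<bar>V x\<bar>) ` {0..1::real})"
      by (intro bounded_imp_bdd_above compact_imp_bounded compact_continuous_image[OF cV01]) simp
    have le: "\<bar>V x\<bar> \<le> M" if "x \<in> {0..1}" for x
      using cSUP_upper[OF that bdd] MV unfolding sup_norm_T_def by simp
    show "\<And>x. x \<in> {0..1} \<Longrightarrow> V x \<le> M" using le by fastforce
    show "0 \<le> M" using le[of 0] by simp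
  qed
  define K where "K = D\<^sub>1 + M"
  have lhsI: "((\<lambda>x. - u x + e * (u x)^2 - P' x - e * ((m1 x)^2 + m x * m2 x) - e * ((u1 x)^2 + u x * u2 x))
      has_integral (- B + e * Su - 0 - e * 0 - e * 0)) {0..1}"
    unfolding B_def Su_def
    by (intro has_integral_diff has_integral_add has_integral_neg has_integral_mult_right iu iu2 IP IQm IQu)
  have rhsI: "((\<lambda>x. K * m x) has_integral K * Am) {0..1}"
    unfolding Am_def by (intro has_integral_mult_right im)
  have pw: "- u x + e * (u x)^2 - P' x - e * ((m1 x)^2 + m x * m2 x) - e * ((u1 x)^2 + u x * u2 x) \<le> K * m x"
    if x: "x \<in> {0..1}" for x
  proof -
    have id: "- u x + e * (u x)^2 - P' x - e * ((m1 x)^2 + m x * m2 x) - e * ((u1 x)^2 + u x * u2 x)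
       = m x * (H (u1 x) - u1 x * hp (u1 x)) + V x * m x - m x powr \<alpha> * m x - e * (m x)^2 - e * (m1 x)^2 - e * (u1 x)^2"
      unfolding P'_def w_def
      apply (rule key_alg[where dw = "dw x"])
      using E1[of x] E2[of x] unfolding u2_def u1_def m2_def m1_def dw_def w_def hp_def by auto
    have h1: "H (u1 x) - u1 x * hp (u1 x) \<le> D\<^sub>1"
      using A2[of "u1 x"] assms(7) unfolding hp_def
      by (smt (verit) mult_nonneg_nonneg powr_ge_zero)
    have "m x * (H (u1 x) - u1 x * hp (u1 x)) \<le> m x * D\<^sub>1"
      using h1 mpos[of x] by (simp add: mult_left_mono)
    moreover have "V x * m x \<le> M * m x" using Vle[OF x] mpos[of x] by (simp add: mult_right_mono)
    moreover have "0 \<le> m x powr \<alpha> * m x" using mpos[of x] by simp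
    moreover have "0 \<le> e * (m x)^2" "0 \<le> e * (m1 x)^2" "0 \<le> e * (u1 x)^2" using e0 by auto
    ultimately show ?thesis unfolding id K_def by (simp add: algebra_simps)
  qed
  have eq1: "- B + e * Su \<le> K * Am"
    using has_integral_le[OF lhsI rhsI pw] by simp
  have SB: "Su \<ge> B^2"
  proof -
    have "((\<lambda>x. (u x)^2 - 2 * B * u x + B^2) has_integral (Su - 2 * B * B + B^2 * (1 - 0))) {0..1}"
      unfolding Su_def B_def
      by (intro has_integral_add has_integral_diff has_integral_mult_right iu iu2)
           (use has_integral_const_real[of "(integral {0..1} u)^2" 0 1] in simp)
    moreover have "((\<lambda>x. 0) has_integral 0) {0..1::real}" by simp
    moreover have "(0::real) \<le> (u x)^2 - 2 * B * u x + B^2" for x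
    proof -
      have "(u x)^2 - 2 * B * u x + B^2 = (u x - B)^2" by (simp add: power2_eq_square algebra_simps)
      then show ?thesis by simp
    qed
    ultimately have "0 \<le> Su - 2 * B * B + B^2 * (1 - 0)" using has_integral_le by blast
    then show ?thesis by (simp add: power2_eq_square)
  qed
  have Am0: "Am \<ge> 0" unfolding Am_def
    using mpos by (intro integral_nonneg integrable_continuous_interval cm) (auto intro: less_imp_le)
  have "Am \<le> 1 + K" by (rule final_arith[OF eq2 eq1 SB Am0 e0 e1]) (use Mnn assms in \<open>simp add: K_def\<close>)
  then show "integral {0..1} m \<le> 1 + D\<^sub>1 + \<bar>M\<bar>" unfolding Am_def K_def using Mnn by simp
qed

end
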